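(* Let $W$ be the group of real $6\times 6$ matrices generated by the orthogonal reflections of $\mathbb R^6$ across the hyperplanes orthogonal to the following $30$ vectors: the $6$ coordinate vectors $e_{ij}$, and the $24$ vectors $e_a\pm e_b\pm e_c\pm e_f$ where $\{a,b,c,f\}$ is the edge set of a $4$-cycle in $K_4$ (i.e., the complement of a perfect matching). Then $W$ has order $23040$, is isomorphic to the Weyl group $D_6$, and leaves the variety $L_{2,4}$ invariant.
   Context: Coordinates of $\mathbb R^6\subset\mathbb C^6$ are indexed by the six edges of $K_4$, with standard basis vectors $e_{ij}$ and the standard Euclidean inner product. $L_{2,4}\subset\mathbb C^6$ is the set of $l$ such that $(l_{ij}^2)$ equals $(\sum_{k=1}^2({\bf p}_i^k-{\bf p}_j^k)^2)$ for some complex configuration ${\bf p}_1,\dots,{\bf p}_4\in\mathbb C^2$; equivalently the hypersurface cut out by the determinant of the symmetric $3\times3$ matrix with diagonal $2l_{14}^2,2l_{24}^2,2l_{34}^2$ and off-diagonal entries $l_{14}^2+l_{24}^2-l_{12}^2$, $l_{14}^2+l_{34}^2-l_{13}^2$, $l_{24}^2+l_{34}^2-l_{23}^2$. *)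

theory Defs
  imports "HOL-Analysis.Analysis" "HOL-Library.Numeral_Type"
begin

text \<open>The six edges of K4 on vertices 1,2,3,4; Eij is the edge {i,j}.\<close>
datatype edge = E12 | E13 | E14 | E23 | E24 | E34

lemma UNIV_edge: "(UNIV :: edge set) = {E12, E13, E14, E23, E24, E34}"
  using edge.exhaust by auto

instance edge :: finite
  by standard (simp add: UNIV_edge)

text \<open>The edge disjoint from a given edge; {e, opp_edge e} runs over the three
  perfect matchings of K4.\<close>
fun opp_edge :: "edge \<Rightarrow> edge" where
  "opp_edge E12 = E34" | "opp_edge E34 = E12"
| "opp_edge E13 = E24" | "opp_edge E24 = E13"
| "opp_edge E14 = E23" | "opp_edge E23 = E14"

definition refl_mat :: "real ^ 'n \<Rightarrow> real ^ 'n ^ 'n" where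
  "refl_mat v = mat 1 - (2 / (v \<bullet> v)) *\<^sub>R (\<chi> i j. v $ i * v $ j)"

inductive_set gen_group :: "(real ^ 'n ^ 'n) set \<Rightarrow> (real ^ 'n ^ 'n) set"
  for S :: "(real ^ 'n ^ 'n) set" where
  gen: "A \<in> S \<Longrightarrow> A \<in> gen_group S"
| one: "mat 1 \<in> gen_group S"
| mult: "A \<in> gen_group S \<Longrightarrow> B \<in> gen_group S \<Longrightarrow> A ** B \<in> gen_group S"
| inv: "A \<in> gen_group S \<Longrightarrow> matrix_inv A \<in> gen_group S"

text \<open>The 30 vectors (up to sign): coordinate vectors e_ij, and
  e_a \<plusminus> e_b \<plusminus> e_c \<plusminus> e_f for {a,b,c,f} the complement of a perfect matching
  {e, opp_edge e}. (Both signs of each vector are included; this does not change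
  the set of reflections.)\<close>
definition W_vectors :: "(real ^ edge) set" where
  "W_vectors = {axis e 1 | e. True} \<union>
     {(\<chi> d. if d = e \<or> d = opp_edge e then 0 else s d) | e s.
        \<forall>d. s d \<in> {1, -1}}"

definition W_group :: "(real ^ edge ^ edge) set" where
  "W_group = gen_group (refl_mat ` W_vectors)"

definition D6_roots :: "(real ^ 6) set" where
  "D6_roots = {axis i 1 + s *\<^sub>R axis j 1 | i j s. i \<noteq> j \<and> s \<in> {1, -1}}"

definition weyl_D6 :: "(real ^ 6 ^ 6) set" where
  "weyl_D6 = gen_group (refl_mat ` D6_roots)"

text \<open>The variety L_{2,4} in C^6 (Cayley--Menger determinant).\<close>
definition CM_matrix :: "complex ^ edge \<Rightarrow> complex ^ 3 ^ 3" where
  "CM_matrix l = (let q = (\<lambda>e. (l $ e)\<^sup>2) in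
     vector [vector [2 * q E14, q E14 + q E24 - q E12, q E14 + q E34 - q E13],
             vector [q E14 + q E24 - q E12, 2 * q E24, q E24 + q E34 - q E23],
             vector [q E14 + q E34 - q E13, q E24 + q E34 - q E23, 2 * q E34]])"

definition L24 :: "(complex ^ edge) set" where
  "L24 = {l. det (CM_matrix l) = 0}"

definition cact :: "real ^ edge ^ edge \<Rightarrow> complex ^ edge \<Rightarrow> complex ^ edge" where
  "cact A l = (\<chi> i. \<Sum>j\<in>UNIV. complex_of_real (A $ i $ j) * l $ j)"

end

theory Submission
  imports Defs
begin


lemma inv_unique:
  fixes A :: "'a::comm_ring_1^'n^'n"
  assumes "A ** B = mat 1" "B ** A = mat 1"
  shows "matrix_inv A = B"
proof -
  let ?C = "matrix_inv A"
  have ex: "\<exists>A'. A ** A' = mat 1 \<and> A' ** A = mat 1" using assms by blast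
  have C: "A ** ?C = mat 1 \<and> ?C ** A = mat 1"
    unfolding matrix_inv_def by (rule someI_ex[OF ex])
  have "?C = ?C ** (A ** B)" using assms by simp
  also have "\<dots> = (?C ** A) ** B" by (simp add: matrix_mul_assoc)
  also have "\<dots> = B" using C by simp
  finally show ?thesis .
qed

lemma orth_inv: "orthogonal_matrix (A::real^'n^'n) \<Longrightarrow> matrix_inv A = transpose A"
  unfolding orthogonal_matrix_def by (intro inv_unique) (auto simp del: vec_eq_iff)

lemma mm_diff_l: "((A::'a::comm_ring_1^'n^'m) - B) ** C = A ** C - B ** C"
  by (simp add: matrix_matrix_mult_def vec_eq_iff sum_subtractf left_diff_distrib)

lemma mm_diff_r: "(A::'a::comm_ring_1^'n^'m) ** (B - C) = A ** B - A ** C"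
  by (simp add: matrix_matrix_mult_def vec_eq_iff sum_subtractf right_diff_distrib)

lemma refl_sym: "transpose (refl_mat v) = refl_mat v"
  unfolding refl_mat_def by (simp add: transpose_def vec_eq_iff mat_def mult.commute)

lemma outer_sq:
  fixes v :: "real^'n"
  shows "(\<chi> i j. v $ i * v $ j) ** (\<chi> i j. v $ i * v $ j) = (v \<bullet> v) *\<^sub>R (\<chi> i j. v $ i * v $ j)"
  unfolding matrix_matrix_mult_def inner_vec_def
  by (simp add: vec_eq_iff sum_distrib_left sum_distrib_right algebra_simps)

lemma refl_sq:
  fixes v :: "real^'n"
  assumes "v \<noteq> 0"
  shows "refl_mat v ** refl_mat v = mat 1"
proof -
  let ?P = "(\<chi> i j. v $ i * v $ j) :: real^'n^'n"
  let ?c = "2 / (v \<bullet> v)"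
  have vv: "v \<bullet> v \<noteq> 0" using assms by simp
  have "refl_mat v ** refl_mat v = mat 1 - ?c *\<^sub>R ?P - (?c *\<^sub>R ?P - (?c * ?c) *\<^sub>R (?P ** ?P))"
    unfolding refl_mat_def mm_diff_l mm_diff_r
    by (simp add: matrix_scalar_ac flip: scalar_matrix_assoc)
  also have "\<dots> = mat 1 - (?c + ?c - ?c * ?c * (v \<bullet> v)) *\<^sub>R ?P"
    unfolding outer_sq by (simp add: vec_eq_iff algebra_simps)
  moreover have "?c + ?c - ?c * ?c * (v \<bullet> v) = 0" using vv by (simp add: field_simps)
  ultimately show ?thesis by simp
qed

lemma refl_orth: "(v::real^'n) \<noteq> 0 \<Longrightarrow> orthogonal_matrix (refl_mat v)"
  unfolding orthogonal_matrix_def refl_sym using refl_sq by auto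

lemma gen_orth:
  assumes "A \<in> gen_group S" "\<And>B. B \<in> S \<Longrightarrow> orthogonal_matrix B"
  shows "orthogonal_matrix A"
  using assms(1)
proof induction
  case (gen A) then show ?case using assms(2) by auto
next
  case one then show ?case by (rule orthogonal_matrix_id)
next
  case (mult A B) then show ?case by (simp add: orthogonal_matrix_mul)
next
  case (inv A) then show ?case by (simp add: orth_inv)
qed


definition cmdet :: "complex \<Rightarrow> complex \<Rightarrow> complex \<Rightarrow> complex \<Rightarrow> complex \<Rightarrow> complex \<Rightarrow> complex" where
 "cmdet a12 a13 a14 a23 a24 a34 = 
   2*a14 * (2*a24) * (2*a34) + (a14 + a24 - a12) * (a24 + a34 - a23) * (a14 + a34 - a13)
 + (a14 + a34 - a13) * (a14 + a24 - a12) * (a24 + a34 - a23)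
 - 2*a14 * (a24 + a34 - a23) * (a24 + a34 - a23)
 - (a14 + a24 - a12) * (a14 + a24 - a12) * (2*a34)
 - (a14 + a34 - a13) * (2*a24) * (a14 + a34 - a13)"

lemma det_CM: "det (CM_matrix l) = cmdet ((l$E12)^2) ((l$E13)^2) ((l$E14)^2) ((l$E23)^2) ((l$E24)^2) ((l$E34)^2)"
  unfolding CM_matrix_def Let_def det_3 cmdet_def
  by (simp add: vector_3)

lemma idA: "cmdet (x^2) ((a - (a+b+c+d)/2)^2) ((b - (a+b+c+d)/2)^2) ((c - (a+b+c+d)/2)^2) ((d - (a+b+c+d)/2)^2) (y^2)
   = cmdet (x^2) (a^2) (b^2) (c^2) (d^2) (y^2)"
  unfolding cmdet_def by algebra

lemma idB: "cmdet ((a - (a+b+c+d)/2)^2) (x^2) ((b - (a+b+c+d)/2)^2) ((c - (a+b+c+d)/2)^2) (y^2) ((d - (a+b+c+d)/2)^2)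
   = cmdet (a^2) (x^2) (b^2) (c^2) (y^2) (d^2)"
  unfolding cmdet_def by algebra

lemma idC: "cmdet ((a - (a+b+c+d)/2)^2) ((b - (a+b+c+d)/2)^2) (x^2) (y^2) ((c - (a+b+c+d)/2)^2) ((d - (a+b+c+d)/2)^2)
   = cmdet (a^2) (b^2) (x^2) (y^2) (c^2) (d^2)"
  unfolding cmdet_def by algebra

lemma sum_edge: "(\<Sum>j\<in>UNIV. f j) = f E12 + f E13 + f E14 + f E23 + f E24 + f (E34::edge)"
  unfolding UNIV_edge by (simp add: add.assoc)

lemma cact_refl: "cact (refl_mat v) l $ d =
   l $ d - complex_of_real (2 / (v \<bullet> v) * v $ d) * (\<Sum>j\<in>UNIV. complex_of_real (v $ j) * l $ j)"
proof -
  have "cact (refl_mat v) l $ d = (\<Sum>j\<in>UNIV. (if d = j then l $ j else 0)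
       - complex_of_real (2 / (v \<bullet> v) * v $ d) * (complex_of_real (v $ j) * l $ j))"
    unfolding cact_def refl_mat_def vec_lambda_beta
    by (intro sum.cong) (auto simp: mat_def algebra_simps)
  also have "\<dots> = l $ d - complex_of_real (2 / (v \<bullet> v) * v $ d) * (\<Sum>j\<in>UNIV. complex_of_real (v $ j) * l $ j)"
    by (simp add: sum_subtractf sum_distrib_left)
  finally show ?thesis .
qed

lemma sgn_sq: "s = 1 \<or> s = -1 \<Longrightarrow> (complex_of_real s * z)^2 = z^2"
  by auto

lemma sgn_sq2: "s = 1 \<or> s = -1 \<Longrightarrow> (z - complex_of_real s * X / 2)^2 = (complex_of_real s * z - X/2)^2"
  by (auto simp: power2_eq_square algebra_simps)

lemma inner_edge: "(v::real^edge) \<bullet> w = v$E12 * w$E12 + v$E13 * w$E13 + v$E14 * w$E14 + v$E23 * w$E23 + v$E24 * w$E24 + v$E34 * w$E34"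
  unfolding inner_vec_def sum_edge by simp

lemma refl_axis_inv: "det (CM_matrix (cact (refl_mat (axis e 1)) l)) = det (CM_matrix l)"
proof -
  have "(cact (refl_mat (axis e 1)) l $ d)^2 = (l $ d)^2" for d
    unfolding cact_refl
    by (cases e; cases d) (simp_all add: sum_edge inner_edge axis_def power2_eq_square algebra_simps)
  then show ?thesis unfolding det_CM by simp
qed

lemma refl_four_inv:
  assumes s: "\<forall>d. s d \<in> {1, -1::real}"
  shows "det (CM_matrix (cact (refl_mat (\<chi> d. if d = e \<or> d = opp_edge e then 0 else s d)) l)) = det (CM_matrix l)"
proof -
  let ?v = "(\<chi> d. if d = e \<or> d = opp_edge e then 0 else s d) :: real^edge"
  have s': "s d = 1 \<or> s d = -1" for d using s by auto
  have ss: "s d * s d = 1" for d using s'[of d] by auto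
  have vv: "?v \<bullet> ?v = 4"
    by (cases e) (simp_all add: inner_edge ss)
  let ?S = "\<lambda>d. complex_of_real (s d) * l $ d"
  show ?thesis
  proof (cases e)
    case E12
    have "det (CM_matrix (cact (refl_mat ?v) l)) = cmdet ((l $ E12)^2) ((?S E13 - (?S E13 + ?S E14 + ?S E23 + ?S E24)/2)^2) ((?S E14 - (?S E13 + ?S E14 + ?S E23 + ?S E24)/2)^2) ((?S E23 - (?S E13 + ?S E14 + ?S E23 + ?S E24)/2)^2) ((?S E24 - (?S E13 + ?S E14 + ?S E23 + ?S E24)/2)^2) ((l $ E34)^2)"
      unfolding det_CM cact_refl vv using E12 by (simp add: sum_edge sgn_sq2[OF s'])
    also have "\<dots> = det (CM_matrix l)" unfolding idA det_CM by (simp add: sgn_sq[OF s'])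
    finally show ?thesis .
  next
    case E13
    have "det (CM_matrix (cact (refl_mat ?v) l)) = cmdet ((?S E12 - (?S E12 + ?S E14 + ?S E23 + ?S E34)/2)^2) ((l $ E13)^2) ((?S E14 - (?S E12 + ?S E14 + ?S E23 + ?S E34)/2)^2) ((?S E23 - (?S E12 + ?S E14 + ?S E23 + ?S E34)/2)^2) ((l $ E24)^2) ((?S E34 - (?S E12 + ?S E14 + ?S E23 + ?S E34)/2)^2)"
      unfolding det_CM cact_refl vv using E13 by (simp add: sum_edge sgn_sq2[OF s'])
    also have "\<dots> = det (CM_matrix l)" unfolding idB det_CM by (simp add: sgn_sq[OF s'])
    finally show ?thesis .
  next
    case E14
    have "det (CM_matrix (cact (refl_mat ?v) l)) = cmdet ((?S E12 - (?S E12 + ?S E13 + ?S E24 + ?S E34)/2)^2) ((?S E13 - (?S E12 + ?S E13 + ?S E24 + ?S E34)/2)^2) ((l $ E14)^2) ((l $ E23)^2) ((?S E24 - (?S E12 + ?S E13 + ?S E24 + ?S E34)/2)^2) ((?S E34 - (?S E12 + ?S E13 + ?S E24 + ?S E34)/2)^2)"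
      unfolding det_CM cact_refl vv using E14 by (simp add: sum_edge sgn_sq2[OF s'])
    also have "\<dots> = det (CM_matrix l)" unfolding idC det_CM by (simp add: sgn_sq[OF s'])
    finally show ?thesis .
  next
    case E23
    have "det (CM_matrix (cact (refl_mat ?v) l)) = cmdet ((?S E12 - (?S E12 + ?S E13 + ?S E24 + ?S E34)/2)^2) ((?S E13 - (?S E12 + ?S E13 + ?S E24 + ?S E34)/2)^2) ((l $ E14)^2) ((l $ E23)^2) ((?S E24 - (?S E12 + ?S E13 + ?S E24 + ?S E34)/2)^2) ((?S E34 - (?S E12 + ?S E13 + ?S E24 + ?S E34)/2)^2)"
      unfolding det_CM cact_refl vv using E23 by (simp add: sum_edge sgn_sq2[OF s'])
    also have "\<dots> = det (CM_matrix l)" unfolding idC det_CM by (simp add: sgn_sq[OF s'])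
    finally show ?thesis .
  next
    case E24
    have "det (CM_matrix (cact (refl_mat ?v) l)) = cmdet ((?S E12 - (?S E12 + ?S E14 + ?S E23 + ?S E34)/2)^2) ((l $ E13)^2) ((?S E14 - (?S E12 + ?S E14 + ?S E23 + ?S E34)/2)^2) ((?S E23 - (?S E12 + ?S E14 + ?S E23 + ?S E34)/2)^2) ((l $ E24)^2) ((?S E34 - (?S E12 + ?S E14 + ?S E23 + ?S E34)/2)^2)"
      unfolding det_CM cact_refl vv using E24 by (simp add: sum_edge sgn_sq2[OF s'])
    also have "\<dots> = det (CM_matrix l)" unfolding idB det_CM by (simp add: sgn_sq[OF s'])
    finally show ?thesis .
  next
    case E34
    have "det (CM_matrix (cact (refl_mat ?v) l)) = cmdet ((l $ E12)^2) ((?S E13 - (?S E13 + ?S E14 + ?S E23 + ?S E24)/2)^2) ((?S E14 - (?S E13 + ?S E14 + ?S E23 + ?S E24)/2)^2) ((?S E23 - (?S E13 + ?S E14 + ?S E23 + ?S E24)/2)^2) ((?S E24 - (?S E13 + ?S E14 + ?S E23 + ?S E24)/2)^2) ((l $ E34)^2)"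
      unfolding det_CM cact_refl vv using E34 by (simp add: sum_edge sgn_sq2[OF s'])
    also have "\<dots> = det (CM_matrix l)" unfolding idA det_CM by (simp add: sgn_sq[OF s'])
    finally show ?thesis .
  qed
qed

lemma cact_mult: "cact (A ** B) l = cact A (cact B l)"
proof -
  have "cact (A ** B) l $ i = cact A (cact B l) $ i" for i
  proof -
    have "cact (A ** B) l $ i = (\<Sum>j\<in>UNIV. \<Sum>k\<in>UNIV. complex_of_real (A $ i $ k) * (complex_of_real (B $ k $ j) * l $ j))"
      unfolding cact_def matrix_matrix_mult_def
      by (simp add: of_real_sum sum_distrib_right mult.assoc)
    also have "\<dots> = (\<Sum>k\<in>UNIV. \<Sum>j\<in>UNIV. complex_of_real (A $ i $ k) * (complex_of_real (B $ k $ j) * l $ j))"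
      by (rule sum.swap)
    also have "\<dots> = cact A (cact B l) $ i"
      unfolding cact_def by (simp add: sum_distrib_left)
    finally show ?thesis .
  qed
  then show ?thesis by (simp add: vec_eq_iff)
qed

lemma cact_id: "cact (mat 1) l = l"
  unfolding cact_def mat_def by (simp add: vec_eq_iff if_distrib if_distribR cong: if_cong)

lemma W_vectors_nz: "v \<in> W_vectors \<Longrightarrow> v \<noteq> 0"
proof (auto simp: W_vectors_def)
  fix e and s :: "edge \<Rightarrow> real"
  assume s: "\<forall>d. s d = 1 \<or> s d = -1"
    and z: "(\<chi> d. if d = e \<or> d = opp_edge e then 0 else s d) = 0"
  have "s d \<noteq> 0" for d using s by (metis one_neq_zero zero_neq_neg_one)
  moreover have "\<exists>d. d \<noteq> e \<and> d \<noteq> opp_edge e" by (cases e) auto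
  then obtain d where d: "d \<noteq> e" "d \<noteq> opp_edge e" by blast
  have "(\<chi> d. if d = e \<or> d = opp_edge e then 0 else s d) $ d = (0::real^edge) $ d" using z by simp
  ultimately show False using d by simp
qed

lemma W_orth: "A \<in> W_group \<Longrightarrow> orthogonal_matrix A"
  unfolding W_group_def by (erule gen_orth) (use refl_orth W_vectors_nz in blast)

lemma W_gen_inv: "v \<in> W_vectors \<Longrightarrow> det (CM_matrix (cact (refl_mat v) l)) = det (CM_matrix l)"
  unfolding W_vectors_def using refl_axis_inv refl_four_inv by auto

lemma W_det_inv: "A \<in> W_group \<Longrightarrow> det (CM_matrix (cact A l)) = det (CM_matrix l)"
  unfolding W_group_def
proof (induction A arbitrary: l rule: gen_group.induct)
  case (gen A) then show ?case using W_gen_inv by auto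
next
  case one then show ?case by (simp add: cact_id)
next
  case (mult A B) then show ?case by (simp add: cact_mult)
next
  case (inv A)
  have o: "orthogonal_matrix A" using inv.hyps W_orth unfolding W_group_def by auto
  then have mi: "matrix_inv A = transpose A" by (rule orth_inv)
  have "A ** transpose A = mat 1" using o unfolding orthogonal_matrix_def by auto
  then have "det (CM_matrix l) = det (CM_matrix (cact A (cact (transpose A) l)))"
    by (simp add: cact_mult[symmetric] cact_id)
  also have "\<dots> = det (CM_matrix (cact (transpose A) l))" using inv.IH by simp
  finally show ?case using mi by simp
qed

lemma W_L24: "A \<in> W_group \<Longrightarrow> cact A ` L24 = L24"
proof
  assume A: "A \<in> W_group"
  show "cact A ` L24 \<subseteq> L24" using W_det_inv[OF A] unfolding L24_def by auto
  have o: "orthogonal_matrix A" using W_orth A by auto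
  have At: "transpose A \<in> W_group"
    using gen_group.inv[of A] A orth_inv[OF o] unfolding W_group_def by auto
  have AAt: "A ** transpose A = mat 1" using o unfolding orthogonal_matrix_def by auto
  show "L24 \<subseteq> cact A ` L24"
  proof
    fix l assume l: "l \<in> L24"
    have "l = cact A (cact (transpose A) l)" using AAt by (simp add: cact_mult[symmetric] cact_id)
    moreover have "cact (transpose A) l \<in> L24" using W_det_inv[OF At] l unfolding L24_def by auto
    ultimately show "l \<in> cact A ` L24" by blast
  qed
qed


locale conj =
  fixes T :: "real^'m^'n" and k :: real
  assumes k: "k \<noteq> 0"
    and TtT: "transpose T ** T = k *\<^sub>R mat 1"
    and TTt: "T ** transpose T = k *\<^sub>R mat 1"
begin

definition phi :: "real^'m^'m \<Rightarrow> real^'n^'n" where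
  "phi A = (1/k) *\<^sub>R (T ** A ** transpose T)"

definition psi :: "real^'n^'n \<Rightarrow> real^'m^'m" where
  "psi B = (1/k) *\<^sub>R (transpose T ** B ** T)"

lemma phi_mult: "phi (A ** B) = phi A ** phi B"
proof -
  have "phi A ** phi B = ((1/k) * (1/k)) *\<^sub>R (T ** A ** (transpose T ** T) ** B ** transpose T)"
    unfolding phi_def by (simp add: matrix_scalar_ac matrix_mul_assoc flip: scalar_matrix_assoc)
  also have "\<dots> = phi (A ** B)"
    unfolding TtT phi_def using k
    by (simp add: matrix_scalar_ac matrix_mul_assoc flip: scalar_matrix_assoc)
  finally show ?thesis by simp
qed

lemma phi_one: "phi (mat 1) = mat 1"
  unfolding phi_def using k by (simp add: TTt)

lemma phi_transpose: "phi (transpose A) = transpose (phi A)"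
  unfolding phi_def by (simp add: transpose_scalar matrix_transpose_mul matrix_mul_assoc)

lemma phi_orth: "orthogonal_matrix A \<Longrightarrow> orthogonal_matrix (phi A)"
  unfolding orthogonal_matrix_def
  by (metis phi_mult phi_one phi_transpose)

lemma psi_phi: "psi (phi A) = A"
proof -
  have "psi (phi A) = ((1/k) * (1/k)) *\<^sub>R ((transpose T ** T) ** A ** (transpose T ** T))"
    unfolding phi_def psi_def by (simp add: matrix_scalar_ac matrix_mul_assoc flip: scalar_matrix_assoc)
  also have "\<dots> = A" unfolding TtT using k
    by (simp add: matrix_scalar_ac flip: scalar_matrix_assoc)
  finally show ?thesis .
qed

lemma phi_inj: "inj phi"
  by (metis injI psi_phi)

lemma outer_conj:
  "T ** (\<chi> i j. v $ i * v $ j) ** transpose T = (\<chi> i j. (T *v v) $ i * (T *v v) $ j)"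
  unfolding matrix_matrix_mult_def matrix_vector_mult_def transpose_def
  by (simp add: vec_eq_iff sum_distrib_left sum_distrib_right algebra_simps)

lemma norm_conj: "(T *v v) \<bullet> (T *v v) = k * (v \<bullet> v)"
proof -
  have "(T *v v) \<bullet> (T *v v) = (v v* transpose T) \<bullet> (T *v v)" by simp
  also have "\<dots> = v \<bullet> (transpose T *v (T *v v))" by (rule dot_lmul_matrix)
  also have "\<dots> = v \<bullet> ((k *\<^sub>R mat 1) *v v)" by (simp add: matrix_vector_mul_assoc TtT)
  also have "(k *\<^sub>R mat 1) *v v = k *\<^sub>R v"
    by (simp add: vec_eq_iff matrix_vector_mult_def mat_def if_distrib if_distribR cong: if_cong)
  finally show ?thesis by simp
qed

lemma phi_refl: "phi (refl_mat v) = refl_mat (T *v v)"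
proof -
  have "phi (refl_mat v) = (1/k) *\<^sub>R (T ** mat 1 ** transpose T)
     - ((1/k) * (2 / (v \<bullet> v))) *\<^sub>R (T ** (\<chi> i j. v $ i * v $ j) ** transpose T)"
    unfolding phi_def refl_mat_def mm_diff_l mm_diff_r
    by (simp add: matrix_scalar_ac matrix_mul_assoc algebra_simps flip: scalar_matrix_assoc)
  also have "\<dots> = refl_mat (T *v v)"
    unfolding refl_mat_def outer_conj norm_conj using k by (simp add: TTt)
  finally show ?thesis .
qed

lemma phi_gen:
  assumes S: "\<And>A. A \<in> S \<Longrightarrow> orthogonal_matrix A"
  shows "phi ` gen_group S = gen_group (phi ` S)"
proof
  show "phi ` gen_group S \<subseteq> gen_group (phi ` S)"
  proof
    fix B assume "B \<in> phi ` gen_group S"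
    then obtain A where A: "A \<in> gen_group S" and B: "B = phi A" by blast
    from A have "phi A \<in> gen_group (phi ` S)"
    proof induction
      case (gen A) then show ?case by (auto intro: gen_group.gen)
    next
      case one then show ?case using gen_group.one phi_one by metis
    next
      case (mult A B) then show ?case using gen_group.mult phi_mult by metis
    next
      case (inv A)
      have o: "orthogonal_matrix A" using gen_orth[OF inv.hyps S] by blast
      have "phi (matrix_inv A) = matrix_inv (phi A)"
        using o phi_orth[OF o] by (simp add: orth_inv phi_transpose)
      then show ?case using gen_group.inv[OF inv.IH] by simp
    qed
    then show "B \<in> gen_group (phi ` S)" using B by simp
  qed
next
  show "gen_group (phi ` S) \<subseteq> phi ` gen_group S"
  proof
    fix B assume "B \<in> gen_group (phi ` S)"
    then show "B \<in> phi ` gen_group S"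
    proof induction
      case (gen A) then show ?case by (auto intro: gen_group.gen)
    next
      case one then show ?case using gen_group.one phi_one by (metis image_eqI)
    next
      case (mult A B)
      then obtain A' B' where "A' \<in> gen_group S" "B' \<in> gen_group S" "A = phi A'" "B = phi B'" by blast
      then show ?case using gen_group.mult phi_mult by (metis image_eqI)
    next
      case (inv A)
      then obtain A' where A': "A' \<in> gen_group S" "A = phi A'" by blast
      have o: "orthogonal_matrix A'" using gen_orth[OF A'(1) S] by blast
      have "matrix_inv A = phi (matrix_inv A')"
        using o phi_orth[OF o] A'(2) by (simp add: orth_inv phi_transpose)
      then show ?case using gen_group.inv[OF A'(1)] by blast
    qed
  qed
qed

end

lemma refl_scale: "c \<noteq> 0 \<Longrightarrow> refl_mat (c *\<^sub>R v) = refl_mat v"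
  unfolding refl_mat_def by (simp add: vec_eq_iff algebra_simps power2_eq_square)


definition sp :: "('n \<Rightarrow> 'n) \<Rightarrow> ('n \<Rightarrow> real) \<Rightarrow> real^'n^'n" where
  "sp p s = (\<chi> i j. if i = p j then s i else 0)"

lemma sp_mult:
  assumes "bij p"
  shows "sp p s ** sp q t = sp (p \<circ> q) (\<lambda>i. s i * t (inv p i))"
proof -
  have "(sp p s ** sp q t) $ i $ k = sp (p \<circ> q) (\<lambda>i. s i * t (inv p i)) $ i $ k" for i k
  proof -
    have "(sp p s ** sp q t) $ i $ k = (\<Sum>j\<in>UNIV. if j = q k then (if i = p j then s i else 0) * t j else 0)"
      unfolding sp_def matrix_matrix_mult_def vec_lambda_beta by (rule sum.cong) auto
    also have "\<dots> = (if i = p (q k) then s i else 0) * t (q k)"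
      by (simp add: sum.delta)
    also have "\<dots> = sp (p \<circ> q) (\<lambda>i. s i * t (inv p i)) $ i $ k"
      unfolding sp_def using assms by (auto simp: bij_is_inj inv_f_f)
    finally show ?thesis .
  qed
  then show ?thesis by (simp add: vec_eq_iff)
qed

lemma sp_one: "sp id (\<lambda>_. 1) = mat 1"
  unfolding sp_def mat_def by (simp add: vec_eq_iff)

lemma sp_inv:
  assumes p: "bij p" and s: "\<forall>i. s i = 1 \<or> s i = -1"
  shows "matrix_inv (sp p s) = sp (inv p) (s \<circ> p)"
proof (rule inv_unique)
  have ss: "s i * s i = 1" for i using s by (metis mult_1 mult_minus1 minus_minus)
  have c1: "p \<circ> inv p = id" using p by (metis bij_is_surj surj_iff)
  have c2: "(\<lambda>i. s i * (s \<circ> p) (inv p i)) = (\<lambda>_. 1)"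
    using p ss by (simp add: bij_is_surj surj_f_inv_f)
  show "sp p s ** sp (inv p) (s \<circ> p) = mat 1"
    unfolding sp_mult[OF p] c1 c2 by (rule sp_one)
  have p': "bij (inv p)" using p by (simp add: bij_imp_bij_inv)
  have c3: "inv p \<circ> p = id" using p by (metis bij_is_inj inj_iff)
  have c4: "(\<lambda>i. (s \<circ> p) i * s (inv (inv p) i)) = (\<lambda>_. 1)"
    using p ss by (simp add: inv_inv_eq)
  show "sp (inv p) (s \<circ> p) ** sp p s = mat 1"
    unfolding sp_mult[OF p'] c3 c4 by (rule sp_one)
qed


definition roots :: "(real^'n) set" where
  "roots = {axis i 1 + s *\<^sub>R axis j 1 | i j s. i \<noteq> j \<and> s \<in> {1, -1}}"

definition SPset :: "(real^'n^'n) set" where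
  "SPset = {sp p s | p s. p permutes UNIV \<and> (\<forall>i. s i = 1 \<or> s i = -1) \<and> prod s UNIV = 1}"

lemma prod_two:
  assumes "i \<noteq> j"
  shows "(\<Prod>k\<in>(UNIV::'n::finite set). if k = i \<or> k = j then c else 1) = c * (c::real)"
proof -
  have "(\<Prod>k\<in>(UNIV::'n set). if k = i \<or> k = j then c else 1) = (\<Prod>k\<in>{i,j}. c)"
    by (rule prod.mono_neutral_cong_right) auto
  then show ?thesis using assms by simp
qed

lemma refl_root:
  assumes ij: "i \<noteq> j" and sg: "\<sigma> = 1 \<or> \<sigma> = -1"
  shows "refl_mat (axis i 1 + \<sigma> *\<^sub>R axis j 1 :: real^'n) =
         sp (Transposition.transpose i j) (\<lambda>k. if k = i \<or> k = j then -\<sigma> else 1)"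
proof -
  have vv: "(axis i 1 + \<sigma> *\<^sub>R axis j 1 :: real^'n) \<bullet> (axis i 1 + \<sigma> *\<^sub>R axis j 1) = 2"
    using ij sg by (auto simp: inner_add_left inner_add_right inner_axis_axis)
  show ?thesis
    unfolding refl_mat_def vv using ij sg
    by (auto simp: vec_eq_iff sp_def axis_def mat_def Transposition.transpose_def)
qed

lemma sign_prod: "(\<forall>i. s i = 1 \<or> s i = -1) \<Longrightarrow> prod s A = 1 \<or> prod s A = (-1::real)"
proof (induction A rule: infinite_finite_induct)
  case (insert x F) then show ?case by (metis mult_1 mult_minus1 minus_minus prod.insert)
qed auto

lemma weyl_sub: "gen_group (refl_mat ` roots) \<subseteq> (SPset :: (real^'n^'n) set)"
proof
  fix A :: "real^'n^'n" assume "A \<in> gen_group (refl_mat ` roots)"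
  then show "A \<in> SPset"
  proof induction
    case (gen A)
    then obtain i j \<sigma> where ij: "i \<noteq> j" and sg: "\<sigma> = 1 \<or> \<sigma> = -1"
      and A: "A = refl_mat (axis i 1 + \<sigma> *\<^sub>R axis j 1 :: real^'n)"
      unfolding roots_def by auto
    have pr: "(\<Prod>k\<in>UNIV. if k = i \<or> k = j then -\<sigma> else 1) = (1::real)"
      unfolding prod_two[OF ij] using sg by auto
    have sgs: "\<forall>k. (if k = i \<or> k = j then -\<sigma> else 1) = 1 \<or> (if k = i \<or> k = j then -\<sigma> else 1) = (-1::real)"
      using sg by auto
    show ?case unfolding A refl_root[OF ij sg] SPset_def
      using pr sgs permutes_swap_id[of i UNIV j] by blast
  next
    case one
    show ?case unfolding SPset_def using sp_one[symmetric] by fastforce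
  next
    case (mult A B)
    then obtain p s q t where p: "p permutes UNIV" and s: "\<forall>i. s i = 1 \<or> s i = -1" "prod s UNIV = 1"
      and q: "q permutes UNIV" and t: "\<forall>i. t i = 1 \<or> t i = -1" "prod t UNIV = 1"
      and A: "A = sp p s" and B: "B = sp q t"
      unfolding SPset_def by blast
    have bp: "bij p" using p by (rule permutes_bij)
    have ip: "inv p permutes UNIV" using p by (rule permutes_inv)
    have "prod (\<lambda>i. s i * t (inv p i)) UNIV = prod s UNIV * prod (t \<circ> inv p) UNIV"
      by (simp add: prod.distrib comp_def)
    also have "prod (t \<circ> inv p) UNIV = prod t UNIV" using prod.permute[OF ip, of t] by simp
    finally have "prod (\<lambda>i. s i * t (inv p i)) UNIV = 1" using s t by simp
    moreover have "\<forall>i. s i * t (inv p i) = 1 \<or> s i * t (inv p i) = -1"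
      using s t by (metis mult_1 mult_minus1 minus_minus)
    moreover have "p \<circ> q permutes UNIV" using permutes_compose[OF q p] .
    ultimately show ?case unfolding A B sp_mult[OF bp] SPset_def by blast
  next
    case (inv A)
    then obtain p s where p: "p permutes UNIV" and s: "\<forall>i. s i = 1 \<or> s i = -1" "prod s UNIV = 1"
      and A: "A = sp p s"
      unfolding SPset_def by blast
    have bp: "bij p" using p by (rule permutes_bij)
    have ip: "inv p permutes UNIV" using p by (rule permutes_inv)
    have "prod (s \<circ> p) UNIV = 1" using prod.permute[OF p, of s] s by simp
    moreover have "\<forall>i. (s \<circ> p) i = 1 \<or> (s \<circ> p) i = -1" using s by simp
    ultimately show ?case unfolding A sp_inv[OF bp s(1)] SPset_def using ip by blast
  qed
qed


abbreviation G :: "(real^'n^'n) set" where "G \<equiv> gen_group (refl_mat ` roots)"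

lemma root_in: "i \<noteq> j \<Longrightarrow> \<sigma> = 1 \<or> \<sigma> = -1 \<Longrightarrow> refl_mat (axis i 1 + \<sigma> *\<^sub>R axis j 1 :: real^'n) \<in> G"
  unfolding roots_def by (rule gen_group.gen) blast

lemma G_swap:
  assumes "i \<noteq> j"
  shows "sp (Transposition.transpose i j) (\<lambda>_. 1) \<in> (G :: (real^'n^'n) set)"
proof -
  have "(\<lambda>k::'n. if k = i \<or> k = j then - (-1) else (1::real)) = (\<lambda>_. 1)" by auto
  then show ?thesis using root_in[OF assms, of "-1"] refl_root[OF assms, of "-1"] by auto
qed

lemma G_perm:
  assumes "p permutes (UNIV :: 'n set)"
  shows "sp p (\<lambda>_. 1) \<in> (G :: (real^'n^'n) set)"
  using assms finite_class.finite_UNIV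
proof (induction p rule: permutes_induct)
  case id
  show ?case unfolding sp_one by (rule gen_group.one)
next
  case (swap a b p)
  have e: "sp (Transposition.transpose a b \<circ> p) (\<lambda>_. 1) = sp (Transposition.transpose a b) (\<lambda>_. 1) ** sp p (\<lambda>_. 1)"
    by (simp add: sp_mult)
  show ?case unfolding e by (rule gen_group.mult[OF G_swap[OF swap(3)] swap.IH])
qed

lemma G_dflip:
  assumes ij: "i \<noteq> j"
  shows "sp id (\<lambda>k. if k = i \<or> k = j then -1 else 1) \<in> (G :: (real^'n^'n) set)"
proof -
  let ?d = "\<lambda>k::'n. if k = i \<or> k = j then -1 else (1::real)"
  have "sp (Transposition.transpose i j) (\<lambda>_. 1) ** sp (Transposition.transpose i j) ?d
     = sp (Transposition.transpose i j \<circ> Transposition.transpose i j) (\<lambda>k. 1 * ?d (Transposition.transpose i j k))"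
    by (simp add: sp_mult)
  also have "\<dots> = sp id ?d"
    by (rule arg_cong2[where f=sp]) (auto simp: Transposition.transpose_def)
  finally have eq: "sp (Transposition.transpose i j) (\<lambda>_. 1) ** sp (Transposition.transpose i j) ?d = sp id ?d" .
  have "sp (Transposition.transpose i j) ?d \<in> (G :: (real^'n^'n) set)"
    using root_in[OF ij, of 1] refl_root[OF ij, of 1] by simp
  from gen_group.mult[OF G_swap[OF ij] this] show ?thesis unfolding eq .
qed

lemma prod_remove1: "prod f (UNIV::'n::finite set) = f a * prod f (UNIV - {a})"
  by (simp add: prod.remove)

lemma G_diag:
  "\<forall>s. (\<forall>i. s i = 1 \<or> s i = -1) \<and> prod s UNIV = 1 \<and> card {i. s i = -1} = n
     \<longrightarrow> sp id s \<in> (G :: (real^'n^'n) set)"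
proof (induction n rule: less_induct)
  case (less n)
  show ?case
  proof (intro allI impI)
    fix s :: "'n \<Rightarrow> real"
    assume H: "(\<forall>i. s i = 1 \<or> s i = -1) \<and> prod s UNIV = 1 \<and> card {i. s i = -1} = n"
    then have s: "\<forall>i. s i = 1 \<or> s i = -1" and ps: "prod s UNIV = 1" and n: "card {i. s i = -1} = n"
      by auto
    show "sp id s \<in> G"
    proof (cases "\<exists>a. s a = -1")
      case False
      then have "s = (\<lambda>_. 1)" using s by auto
      then show ?thesis by (simp add: sp_one gen_group.one)
    next
      case True
      then obtain a where a: "s a = -1" by blast
      have "\<exists>b. b \<noteq> a \<and> s b = -1"
      proof (rule ccontr)
        assume "\<not> ?thesis"
        then have "\<forall>b\<in>UNIV - {a}. s b = 1" using s by auto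
        then have "prod s (UNIV - {a}) = 1" by simp
        then have "prod s UNIV = -1" using prod_remove1[of s a] a by simp
        then show False using ps by simp
      qed
      then obtain b where b: "b \<noteq> a" "s b = -1" by blast
      define s1 where "s1 = (\<lambda>k. if k = a \<or> k = b then 1 else s k)"
      let ?d = "\<lambda>k::'n. if k = a \<or> k = b then -1 else (1::real)"
      have s1s: "\<forall>i. s1 i = 1 \<or> s1 i = -1" using s unfolding s1_def by auto
      have "prod s UNIV = prod (\<lambda>k. s1 k * ?d k) UNIV"
        by (rule prod.cong) (auto simp: s1_def a b)
      also have "\<dots> = prod s1 UNIV * prod ?d UNIV" by (rule prod.distrib)
      also have "prod ?d UNIV = 1" using prod_two[OF b(1)[symmetric], of "-1"] by simp
      finally have ps1: "prod s1 UNIV = 1" using ps by simp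
      have sub: "{i. s1 i = -1} \<subset> {i. s i = -1}" using a unfolding s1_def by auto
      then have "card {i. s1 i = -1} < n" using n psubset_card_mono[OF _ sub] by simp
      then have in1: "sp id s1 \<in> G" using less s1s ps1 by blast
      have "sp id s1 ** sp id ?d = sp id (\<lambda>k. s1 k * ?d k)" by (simp add: sp_mult)
      also have "(\<lambda>k. s1 k * ?d k) = s" by (auto simp: s1_def a b)
      finally have "sp id s1 ** sp id ?d = sp id s" .
      then show ?thesis using gen_group.mult[OF in1 G_dflip[OF b(1)[symmetric]]] by simp
    qed
  qed
qed

lemma weyl_sup: "(SPset :: (real^'n^'n) set) \<subseteq> G"
proof
  fix A :: "real^'n^'n" assume "A \<in> SPset"
  then obtain p s where p: "p permutes UNIV" and s: "\<forall>i. s i = 1 \<or> s i = -1" "prod s UNIV = 1"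
    and A: "A = sp p s" unfolding SPset_def by blast
  have "sp id s ** sp p (\<lambda>_. 1) = sp p s" by (simp add: sp_mult)
  then show "A \<in> G" using gen_group.mult[OF G_diag[rule_format, OF conjI[OF s(1) conjI[OF s(2) refl]]] G_perm[OF p]] A by simp
qed

lemma weyl_eq: "G = (SPset :: (real^'n^'n) set)"
  using weyl_sub weyl_sup by blast


lemma sp_inj:
  assumes p: "bij p" and p': "bij p'" and s: "\<forall>i. s i \<noteq> 0" and s': "\<forall>i. s' i \<noteq> 0"
    and eq: "sp p s = sp p' s'"
  shows "p = p' \<and> s = s'"
proof -
  have pp: "p j = p' j" for j
  proof -
    have "sp p s $ p j $ j = s (p j)" unfolding sp_def by simp
    then have "sp p' s' $ p j $ j \<noteq> 0" using s eq by simp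
    then show ?thesis unfolding sp_def by (auto split: if_splits)
  qed
  then have pe: "p = p'" by auto
  have "s i = s' i" for i
  proof -
    obtain j where j: "i = p j" using p by (metis bij_pointE)
    have "sp p s $ i $ j = s i" "sp p' s' $ i $ j = s' i" unfolding sp_def using j pe by auto
    then show ?thesis using eq by simp
  qed
  then show ?thesis using pe by auto
qed

definition Sg :: "('n \<Rightarrow> real) set" where
  "Sg = {s. (\<forall>i. s i = 1 \<or> s i = -1) \<and> prod s UNIV = 1}"

lemma SPset_image: "SPset = (\<lambda>(p,s). sp p s) ` ({p. p permutes (UNIV::'n::finite set)} \<times> Sg)"
proof
  show "SPset \<subseteq> (\<lambda>(p,s). sp p s) ` ({p. p permutes (UNIV::'n::finite set)} \<times> Sg)"
  proof
    fix A assume "A \<in> (SPset :: (real^'n^'n) set)"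
    then obtain p s where "p permutes UNIV" "s \<in> Sg" "A = sp p s" unfolding SPset_def Sg_def by blast
    then show "A \<in> (\<lambda>(p,s). sp p s) ` ({p. p permutes (UNIV::'n::finite set)} \<times> Sg)"
      by (intro image_eqI[where x="(p,s)"]) auto
  qed
  show "(\<lambda>(p,s). sp p s) ` ({p. p permutes (UNIV::'n::finite set)} \<times> Sg) \<subseteq> SPset"
  proof
    fix A assume "A \<in> (\<lambda>(p,s). sp p s) ` ({p. p permutes (UNIV::'n::finite set)} \<times> Sg)"
    then obtain p s where H: "p permutes UNIV" "s \<in> Sg" "A = sp p s" by auto
    then show "A \<in> SPset" unfolding SPset_def Sg_def by blast
  qed
qed

lemma SP_inj: "inj_on (\<lambda>(p,s). sp p s) ({p. p permutes (UNIV::'n::finite set)} \<times> Sg)"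
proof (rule inj_onI, clarify)
  fix p s p' s' assume H: "p permutes (UNIV::'n set)" "s \<in> Sg" "p' permutes (UNIV::'n set)" "s' \<in> Sg"
    "sp p s = sp p' s'"
  have nz: "\<And>x::real. x = 1 \<or> x = -1 \<Longrightarrow> x \<noteq> 0" by auto
  have "\<forall>i. s i \<noteq> 0" "\<forall>i. s' i \<noteq> 0" using nz \<open>s \<in> Sg\<close> \<open>s' \<in> Sg\<close> unfolding Sg_def
    by blast+
  then show "p = p' \<and> s = s'" using sp_inj[OF permutes_bij[OF H(1)] permutes_bij[OF H(3)] _ _ H(5)] by blast
qed

lemma card_Sg: "card (Sg :: ('n::finite \<Rightarrow> real) set) = 2 ^ (CARD('n) - 1)"
proof -
  define SG where "SG = (Sg :: ('n \<Rightarrow> real) set)"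
  define All where "All = {s :: 'n \<Rightarrow> real. \<forall>i. s i = 1 \<or> s i = -1}"
  define Sn where "Sn = {s :: 'n \<Rightarrow> real. (\<forall>i. s i = 1 \<or> s i = -1) \<and> prod s UNIV = -1}"
  have "All = PiE UNIV (\<lambda>_. {1, -1})" unfolding All_def by (auto simp: PiE_def Pi_def extensional_def)
  then have cA: "card All = 2 ^ CARD('n)" by (simp add: card_PiE numeral_2_eq_2)
  have fA: "finite All" using cA by (metis card_gt_0_iff zero_less_numeral zero_less_power)
  have un: "All = SG \<union> Sn" unfolding All_def SG_def Sg_def Sn_def by (auto dest: sign_prod[where A=UNIV])
  have dj: "SG \<inter> Sn = {}" unfolding SG_def Sg_def Sn_def by auto
  obtain a :: 'n where True by blast
  define fl where "fl = (\<lambda>s :: 'n \<Rightarrow> real. s(a := - s a))"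
  have flfl: "fl (fl s) = s" for s unfolding fl_def by auto
  have prfl: "prod (fl s) UNIV = - prod s UNIV" for s
  proof -
    have "prod (fl s) (UNIV - {a}) = prod s (UNIV - {a})" unfolding fl_def by (rule prod.cong) auto
    then show ?thesis using prod_remove1[of "fl s" a] prod_remove1[of s a] unfolding fl_def by simp
  qed
  have sgfl: "(\<forall>i. s i = 1 \<or> s i = -1) \<Longrightarrow> (\<forall>i. fl s i = 1 \<or> fl s i = -1)" for s
  proof -
    have key: "(-x = 1 \<or> -x = -1) \<longleftrightarrow> (x = 1 \<or> x = (-1::real))" for x by auto
    assume "\<forall>i. s i = 1 \<or> s i = -1"
    then show ?thesis unfolding fl_def using key[of "s a"] by (auto split: if_splits)
  qed
  have "bij_betw fl SG Sn"
    by (rule bij_betw_byWitness[where f'=fl]) (auto simp: flfl prfl SG_def Sg_def Sn_def dest: sgfl)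
  then have "card SG = card Sn" by (rule bij_betw_same_card)
  moreover have "finite SG" "finite Sn" using fA un by auto
  then have "card SG + card Sn = 2 ^ CARD('n)"
    using cA un dj card_Un_disjoint[of SG Sn] by simp
  ultimately have "2 * card SG = 2 ^ CARD('n)" by simp
  moreover have "CARD('n) = Suc (CARD('n) - 1)" by simp
  then have "(2::nat) ^ CARD('n) = 2 * 2 ^ (CARD('n) - 1)" by (metis power_Suc)
  ultimately show ?thesis unfolding SG_def by simp
qed

lemma card_SPset: "card (SPset :: (real^'n^'n) set) = fact CARD('n) * 2 ^ (CARD('n) - 1)"
proof -
  have "card (SPset :: (real^'n^'n) set) = card ({p. p permutes (UNIV::'n set)} \<times> (Sg :: ('n \<Rightarrow> real) set))"
    unfolding SPset_image by (rule card_image[OF SP_inj])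
  also have "\<dots> = fact CARD('n) * 2 ^ (CARD('n) - 1)"
    by (simp add: card_cartesian_product card_Sg card_permutations)
  finally show ?thesis .
qed


lemma exhaust_6:
  fixes x :: 6
  shows "x = 1 \<or> x = 2 \<or> x = 3 \<or> x = 4 \<or> x = 5 \<or> x = 6"
proof (induct x)
  case (of_int z)
  then have "z = 0 \<or> z = 1 \<or> z = 2 \<or> z = 3 \<or> z = 4 \<or> z = 5" by fastforce
  then show ?case by auto
qed

lemma UNIV_6: "(UNIV :: 6 set) = {1,2,3,4,5,6}"
  using exhaust_6 by auto

lemma forall_6: "(\<forall>i::6. P i) \<longleftrightarrow> P 1 \<and> P 2 \<and> P 3 \<and> P 4 \<and> P 5 \<and> P 6"
  by (metis exhaust_6)

lemma sum_6: "(\<Sum>i\<in>(UNIV::6 set). f i) = f 1 + f 2 + f 3 + f 4 + f 5 + f 6"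
  unfolding UNIV_6 by (simp add: add.assoc)

lemma "(1::6) \<noteq> 2 \<and> (6::6) \<noteq> 1 \<and> (3::6) \<noteq> 5 \<and> (6::6) \<noteq> 5"
  by simp

lemma "CARD(6) = 6" by simp
lemma "fact 6 * 2 ^ 5 = (23040::nat)" by (simp add: fact_numeral)


definition Tm :: "real^edge^6" where
  "Tm = (\<chi> i e. if i = 1 then (if e = E12 \<or> e = E34 then 1 else 0)
     else if i = 2 then (if e = E12 then 1 else if e = E34 then -1 else 0)
     else if i = 3 then (if e = E13 \<or> e = E24 then 1 else 0)
     else if i = 4 then (if e = E13 then 1 else if e = E24 then -1 else 0)
     else if i = 5 then (if e = E14 \<or> e = E23 then 1 else 0)
     else (if e = E14 then 1 else if e = E23 then -1 else 0))"

lemma Tm_mv: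
  "(Tm *v w) $ 1 = w $ E12 + w $ E34"
  "(Tm *v w) $ 2 = w $ E12 - w $ E34"
  "(Tm *v w) $ 3 = w $ E13 + w $ E24"
  "(Tm *v w) $ 4 = w $ E13 - w $ E24"
  "(Tm *v w) $ 5 = w $ E14 + w $ E23"
  "(Tm *v w) $ 6 = w $ E14 - w $ E23"
  by (simp_all add: Tm_def matrix_vector_mult_def sum_edge)

lemma forall_edge: "(\<forall>e::edge. P e) \<longleftrightarrow> P E12 \<and> P E13 \<and> P E14 \<and> P E23 \<and> P E24 \<and> P E34"
  by (metis edge.exhaust)

lemma TtT: "transpose Tm ** Tm = 2 *\<^sub>R mat 1"
  unfolding matrix_matrix_mult_def transpose_def Tm_def mat_def
  by (simp add: vec_eq_iff sum_6 forall_edge)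

lemma TTt: "Tm ** transpose Tm = 2 *\<^sub>R mat 1"
  unfolding matrix_matrix_mult_def transpose_def Tm_def mat_def
  by (simp add: vec_eq_iff sum_edge forall_6)

interpretation C: conj Tm 2
  by standard (simp_all add: TtT TTt)

lemma mk_ax: "Tm *v axis e 1 = c *\<^sub>R r \<Longrightarrow> c \<noteq> 0 \<Longrightarrow> \<exists>c w. c \<noteq> 0 \<and> w \<in> W_vectors \<and> Tm *v w = c *\<^sub>R r"
  unfolding W_vectors_def by blast

lemma mk_4: "Tm *v (\<chi> d. if d = e \<or> d = opp_edge e then 0 else s d) = c *\<^sub>R r \<Longrightarrow> c \<noteq> 0 \<Longrightarrow> \<forall>d. s d \<in> {1, -1}
   \<Longrightarrow> \<exists>c w. c \<noteq> 0 \<and> w \<in> W_vectors \<and> Tm *v w = c *\<^sub>R r"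
  unfolding W_vectors_def by blast

lemma rootsB: "\<forall>i j. \<forall>\<sigma>\<in>{1, -1}. i \<noteq> j \<longrightarrow>
   (\<exists>c w. c \<noteq> 0 \<and> w \<in> W_vectors \<and> Tm *v w = c *\<^sub>R (axis i 1 + \<sigma> *\<^sub>R axis j (1::real)))"
  apply (simp only: forall_6 ball_simps)
  apply (intro conjI impI)
    subgoal by simp
    subgoal by simp
    subgoal by (rule TrueI)
    subgoal by (rule mk_ax[where e=E12 and c="1"]) (simp_all add: vec_eq_iff forall_6 Tm_mv axis_def)
    subgoal by (rule mk_ax[where e=E34 and c="1"]) (simp_all add: vec_eq_iff forall_6 Tm_mv axis_def)
    subgoal by (rule TrueI)
    subgoal by (rule mk_4[where e=E14 and c=2 and s="(\<lambda>d. 1)"]) (simp_all add: vec_eq_iff forall_6 Tm_mv axis_def)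
    subgoal by (rule mk_4[where e=E14 and c=2 and s="(\<lambda>d. if d \<in> {E13, E24} then -1 else 1)"]) (simp_all add: vec_eq_iff forall_6 Tm_mv axis_def)
    subgoal by (rule TrueI)
    subgoal by (rule mk_4[where e=E14 and c=2 and s="(\<lambda>d. if d \<in> {E24} then -1 else 1)"]) (simp_all add: vec_eq_iff forall_6 Tm_mv axis_def)
    subgoal by (rule mk_4[where e=E14 and c=2 and s="(\<lambda>d. if d \<in> {E13} then -1 else 1)"]) (simp_all add: vec_eq_iff forall_6 Tm_mv axis_def)
    subgoal by (rule TrueI)
    subgoal by (rule mk_4[where e=E13 and c=2 and s="(\<lambda>d. 1)"]) (simp_all add: vec_eq_iff forall_6 Tm_mv axis_def)
    subgoal by (rule mk_4[where e=E13 and c=2 and s="(\<lambda>d. if d \<in> {E14, E23} then -1 else 1)"]) (simp_all add: vec_eq_iff forall_6 Tm_mv axis_def)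
    subgoal by (rule TrueI)
    subgoal by (rule mk_4[where e=E13 and c=2 and s="(\<lambda>d. if d \<in> {E23} then -1 else 1)"]) (simp_all add: vec_eq_iff forall_6 Tm_mv axis_def)
    subgoal by (rule mk_4[where e=E13 and c=2 and s="(\<lambda>d. if d \<in> {E14} then -1 else 1)"]) (simp_all add: vec_eq_iff forall_6 Tm_mv axis_def)
    subgoal by (rule TrueI)
    subgoal by (rule mk_ax[where e=E12 and c="1"]) (simp_all add: vec_eq_iff forall_6 Tm_mv axis_def)
    subgoal by (rule mk_ax[where e=E34 and c="-1"]) (simp_all add: vec_eq_iff forall_6 Tm_mv axis_def)
    subgoal by (rule TrueI)
    subgoal by simp
    subgoal by simp
    subgoal by (rule TrueI)
    subgoal by (rule mk_4[where e=E14 and c=2 and s="(\<lambda>d. if d \<in> {E34} then -1 else 1)"]) (simp_all add: vec_eq_iff forall_6 Tm_mv axis_def)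
    subgoal by (rule mk_4[where e=E14 and c=2 and s="(\<lambda>d. if d \<in> {E13, E24, E34} then -1 else 1)"]) (simp_all add: vec_eq_iff forall_6 Tm_mv axis_def)
    subgoal by (rule TrueI)
    subgoal by (rule mk_4[where e=E14 and c=2 and s="(\<lambda>d. if d \<in> {E24, E34} then -1 else 1)"]) (simp_all add: vec_eq_iff forall_6 Tm_mv axis_def)
    subgoal by (rule mk_4[where e=E14 and c=2 and s="(\<lambda>d. if d \<in> {E13, E34} then -1 else 1)"]) (simp_all add: vec_eq_iff forall_6 Tm_mv axis_def)
    subgoal by (rule TrueI)
    subgoal by (rule mk_4[where e=E13 and c=2 and s="(\<lambda>d. if d \<in> {E34} then -1 else 1)"]) (simp_all add: vec_eq_iff forall_6 Tm_mv axis_def)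
    subgoal by (rule mk_4[where e=E13 and c=2 and s="(\<lambda>d. if d \<in> {E14, E23, E34} then -1 else 1)"]) (simp_all add: vec_eq_iff forall_6 Tm_mv axis_def)
    subgoal by (rule TrueI)
    subgoal by (rule mk_4[where e=E13 and c=2 and s="(\<lambda>d. if d \<in> {E23, E34} then -1 else 1)"]) (simp_all add: vec_eq_iff forall_6 Tm_mv axis_def)
    subgoal by (rule mk_4[where e=E13 and c=2 and s="(\<lambda>d. if d \<in> {E14, E34} then -1 else 1)"]) (simp_all add: vec_eq_iff forall_6 Tm_mv axis_def)
    subgoal by (rule TrueI)
    subgoal by (rule mk_4[where e=E14 and c=2 and s="(\<lambda>d. 1)"]) (simp_all add: vec_eq_iff forall_6 Tm_mv axis_def)
    subgoal by (rule mk_4[where e=E14 and c=2 and s="(\<lambda>d. if d \<in> {E12, E34} then -1 else 1)"]) (simp_all add: vec_eq_iff forall_6 Tm_mv axis_def)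
    subgoal by (rule TrueI)
    subgoal by (rule mk_4[where e=E14 and c=2 and s="(\<lambda>d. if d \<in> {E34} then -1 else 1)"]) (simp_all add: vec_eq_iff forall_6 Tm_mv axis_def)
    subgoal by (rule mk_4[where e=E14 and c=2 and s="(\<lambda>d. if d \<in> {E12} then -1 else 1)"]) (simp_all add: vec_eq_iff forall_6 Tm_mv axis_def)
    subgoal by (rule TrueI)
    subgoal by simp
    subgoal by simp
    subgoal by (rule TrueI)
    subgoal by (rule mk_ax[where e=E13 and c="1"]) (simp_all add: vec_eq_iff forall_6 Tm_mv axis_def)
    subgoal by (rule mk_ax[where e=E24 and c="1"]) (simp_all add: vec_eq_iff forall_6 Tm_mv axis_def)
    subgoal by (rule TrueI)
    subgoal by (rule mk_4[where e=E12 and c=2 and s="(\<lambda>d. 1)"]) (simp_all add: vec_eq_iff forall_6 Tm_mv axis_def)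
    subgoal by (rule mk_4[where e=E12 and c=2 and s="(\<lambda>d. if d \<in> {E14, E23} then -1 else 1)"]) (simp_all add: vec_eq_iff forall_6 Tm_mv axis_def)
    subgoal by (rule TrueI)
    subgoal by (rule mk_4[where e=E12 and c=2 and s="(\<lambda>d. if d \<in> {E23} then -1 else 1)"]) (simp_all add: vec_eq_iff forall_6 Tm_mv axis_def)
    subgoal by (rule mk_4[where e=E12 and c=2 and s="(\<lambda>d. if d \<in> {E14} then -1 else 1)"]) (simp_all add: vec_eq_iff forall_6 Tm_mv axis_def)
    subgoal by (rule TrueI)
    subgoal by (rule mk_4[where e=E14 and c=2 and s="(\<lambda>d. if d \<in> {E24} then -1 else 1)"]) (simp_all add: vec_eq_iff forall_6 Tm_mv axis_def)
    subgoal by (rule mk_4[where e=E14 and c=2 and s="(\<lambda>d. if d \<in> {E12, E24, E34} then -1 else 1)"]) (simp_all add: vec_eq_iff forall_6 Tm_mv axis_def)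
    subgoal by (rule TrueI)
    subgoal by (rule mk_4[where e=E14 and c=2 and s="(\<lambda>d. if d \<in> {E24, E34} then -1 else 1)"]) (simp_all add: vec_eq_iff forall_6 Tm_mv axis_def)
    subgoal by (rule mk_4[where e=E14 and c=2 and s="(\<lambda>d. if d \<in> {E12, E24} then -1 else 1)"]) (simp_all add: vec_eq_iff forall_6 Tm_mv axis_def)
    subgoal by (rule TrueI)
    subgoal by (rule mk_ax[where e=E13 and c="1"]) (simp_all add: vec_eq_iff forall_6 Tm_mv axis_def)
    subgoal by (rule mk_ax[where e=E24 and c="-1"]) (simp_all add: vec_eq_iff forall_6 Tm_mv axis_def)
    subgoal by (rule TrueI)
    subgoal by simp
    subgoal by simp
    subgoal by (rule TrueI)
    subgoal by (rule mk_4[where e=E12 and c=2 and s="(\<lambda>d. if d \<in> {E24} then -1 else 1)"]) (simp_all add: vec_eq_iff forall_6 Tm_mv axis_def)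
    subgoal by (rule mk_4[where e=E12 and c=2 and s="(\<lambda>d. if d \<in> {E14, E23, E24} then -1 else 1)"]) (simp_all add: vec_eq_iff forall_6 Tm_mv axis_def)
    subgoal by (rule TrueI)
    subgoal by (rule mk_4[where e=E12 and c=2 and s="(\<lambda>d. if d \<in> {E23, E24} then -1 else 1)"]) (simp_all add: vec_eq_iff forall_6 Tm_mv axis_def)
    subgoal by (rule mk_4[where e=E12 and c=2 and s="(\<lambda>d. if d \<in> {E14, E24} then -1 else 1)"]) (simp_all add: vec_eq_iff forall_6 Tm_mv axis_def)
    subgoal by (rule TrueI)
    subgoal by (rule mk_4[where e=E13 and c=2 and s="(\<lambda>d. 1)"]) (simp_all add: vec_eq_iff forall_6 Tm_mv axis_def)
    subgoal by (rule mk_4[where e=E13 and c=2 and s="(\<lambda>d. if d \<in> {E12, E34} then -1 else 1)"]) (simp_all add: vec_eq_iff forall_6 Tm_mv axis_def)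
    subgoal by (rule TrueI)
    subgoal by (rule mk_4[where e=E13 and c=2 and s="(\<lambda>d. if d \<in> {E34} then -1 else 1)"]) (simp_all add: vec_eq_iff forall_6 Tm_mv axis_def)
    subgoal by (rule mk_4[where e=E13 and c=2 and s="(\<lambda>d. if d \<in> {E12} then -1 else 1)"]) (simp_all add: vec_eq_iff forall_6 Tm_mv axis_def)
    subgoal by (rule TrueI)
    subgoal by (rule mk_4[where e=E12 and c=2 and s="(\<lambda>d. 1)"]) (simp_all add: vec_eq_iff forall_6 Tm_mv axis_def)
    subgoal by (rule mk_4[where e=E12 and c=2 and s="(\<lambda>d. if d \<in> {E13, E24} then -1 else 1)"]) (simp_all add: vec_eq_iff forall_6 Tm_mv axis_def)
    subgoal by (rule TrueI)
    subgoal by (rule mk_4[where e=E12 and c=2 and s="(\<lambda>d. if d \<in> {E24} then -1 else 1)"]) (simp_all add: vec_eq_iff forall_6 Tm_mv axis_def)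
    subgoal by (rule mk_4[where e=E12 and c=2 and s="(\<lambda>d. if d \<in> {E13} then -1 else 1)"]) (simp_all add: vec_eq_iff forall_6 Tm_mv axis_def)
    subgoal by (rule TrueI)
    subgoal by simp
    subgoal by simp
    subgoal by (rule TrueI)
    subgoal by (rule mk_ax[where e=E14 and c="1"]) (simp_all add: vec_eq_iff forall_6 Tm_mv axis_def)
    subgoal by (rule mk_ax[where e=E23 and c="1"]) (simp_all add: vec_eq_iff forall_6 Tm_mv axis_def)
    subgoal by (rule TrueI)
    subgoal by (rule mk_4[where e=E13 and c=2 and s="(\<lambda>d. if d \<in> {E23} then -1 else 1)"]) (simp_all add: vec_eq_iff forall_6 Tm_mv axis_def)
    subgoal by (rule mk_4[where e=E13 and c=2 and s="(\<lambda>d. if d \<in> {E12, E23, E34} then -1 else 1)"]) (simp_all add: vec_eq_iff forall_6 Tm_mv axis_def)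
    subgoal by (rule TrueI)
    subgoal by (rule mk_4[where e=E13 and c=2 and s="(\<lambda>d. if d \<in> {E23, E34} then -1 else 1)"]) (simp_all add: vec_eq_iff forall_6 Tm_mv axis_def)
    subgoal by (rule mk_4[where e=E13 and c=2 and s="(\<lambda>d. if d \<in> {E12, E23} then -1 else 1)"]) (simp_all add: vec_eq_iff forall_6 Tm_mv axis_def)
    subgoal by (rule TrueI)
    subgoal by (rule mk_4[where e=E12 and c=2 and s="(\<lambda>d. if d \<in> {E23} then -1 else 1)"]) (simp_all add: vec_eq_iff forall_6 Tm_mv axis_def)
    subgoal by (rule mk_4[where e=E12 and c=2 and s="(\<lambda>d. if d \<in> {E13, E23, E24} then -1 else 1)"]) (simp_all add: vec_eq_iff forall_6 Tm_mv axis_def)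
    subgoal by (rule TrueI)
    subgoal by (rule mk_4[where e=E12 and c=2 and s="(\<lambda>d. if d \<in> {E23, E24} then -1 else 1)"]) (simp_all add: vec_eq_iff forall_6 Tm_mv axis_def)
    subgoal by (rule mk_4[where e=E12 and c=2 and s="(\<lambda>d. if d \<in> {E13, E23} then -1 else 1)"]) (simp_all add: vec_eq_iff forall_6 Tm_mv axis_def)
    subgoal by (rule TrueI)
    subgoal by (rule mk_ax[where e=E14 and c="1"]) (simp_all add: vec_eq_iff forall_6 Tm_mv axis_def)
    subgoal by (rule mk_ax[where e=E23 and c="-1"]) (simp_all add: vec_eq_iff forall_6 Tm_mv axis_def)
    subgoal by (rule TrueI)
    subgoal by simp
    subgoal by simp
    subgoal by (rule TrueI)
  done


lemma mk_r: "Tm *v w = c *\<^sub>R (axis i 1 + \<sigma> *\<^sub>R axis j 1) \<Longrightarrow> c \<noteq> 0 \<Longrightarrow> i \<noteq> j \<Longrightarrow> \<sigma> \<in> {1, -1}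
   \<Longrightarrow> \<exists>c r. c \<noteq> 0 \<and> r \<in> D6_roots \<and> Tm *v w = c *\<^sub>R r"
  unfolding D6_roots_def by blast

lemma rootsA_ax: "\<exists>c r. c \<noteq> 0 \<and> r \<in> D6_roots \<and> Tm *v axis e 1 = c *\<^sub>R r"
proof (cases e)
  case E12 show ?thesis unfolding E12
    by (rule mk_r[where i=1 and j=2 and \<sigma>="1" and c=1]) (simp_all add: vec_eq_iff forall_6 Tm_mv axis_def)
next
  case E34 show ?thesis unfolding E34
    by (rule mk_r[where i=1 and j=2 and \<sigma>="-1" and c=1]) (simp_all add: vec_eq_iff forall_6 Tm_mv axis_def)
next
  case E13 show ?thesis unfolding E13
    by (rule mk_r[where i=3 and j=4 and \<sigma>="1" and c=1]) (simp_all add: vec_eq_iff forall_6 Tm_mv axis_def)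
next
  case E24 show ?thesis unfolding E24
    by (rule mk_r[where i=3 and j=4 and \<sigma>="-1" and c=1]) (simp_all add: vec_eq_iff forall_6 Tm_mv axis_def)
next
  case E14 show ?thesis unfolding E14
    by (rule mk_r[where i=5 and j=6 and \<sigma>="1" and c=1]) (simp_all add: vec_eq_iff forall_6 Tm_mv axis_def)
next
  case E23 show ?thesis unfolding E23
    by (rule mk_r[where i=5 and j=6 and \<sigma>="-1" and c=1]) (simp_all add: vec_eq_iff forall_6 Tm_mv axis_def)
qed

lemma rootsA_4:
  assumes s: "\<forall>d. s d \<in> {1, -1::real}"
  shows "\<exists>c r. c \<noteq> 0 \<and> r \<in> D6_roots \<and> Tm *v (\<chi> d. if d = e \<or> d = opp_edge e then 0 else s d) = c *\<^sub>R r"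
proof -
  have s': "s d = 1 \<or> s d = -1" for d using s by auto
  show ?thesis
  proof (cases e)
    case E12 show ?thesis
      by (rule mk_r[where c="2 * s E13" and i="if s E13 = s E24 then 3 else 4" and j="if s E14 = s E23 then 5 else 6" and \<sigma>="s E13 * s E14"])
        (use s'[of E13] s'[of E24] s'[of E14] s'[of E23] E12 in \<open>(elim disjE; simp add: vec_eq_iff forall_6 Tm_mv axis_def)+\<close>)
  next
    case E13 show ?thesis
      by (rule mk_r[where c="2 * s E12" and i="if s E12 = s E34 then 1 else 2" and j="if s E14 = s E23 then 5 else 6" and \<sigma>="s E12 * s E14"])
        (use s'[of E12] s'[of E34] s'[of E14] s'[of E23] E13 in \<open>(elim disjE; simp add: vec_eq_iff forall_6 Tm_mv axis_def)+\<close>)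
  next
    case E14 show ?thesis
      by (rule mk_r[where c="2 * s E12" and i="if s E12 = s E34 then 1 else 2" and j="if s E13 = s E24 then 3 else 4" and \<sigma>="s E12 * s E13"])
        (use s'[of E12] s'[of E34] s'[of E13] s'[of E24] E14 in \<open>(elim disjE; simp add: vec_eq_iff forall_6 Tm_mv axis_def)+\<close>)
  next
    case E23 show ?thesis
      by (rule mk_r[where c="2 * s E12" and i="if s E12 = s E34 then 1 else 2" and j="if s E13 = s E24 then 3 else 4" and \<sigma>="s E12 * s E13"])
        (use s'[of E12] s'[of E34] s'[of E13] s'[of E24] E23 in \<open>(elim disjE; simp add: vec_eq_iff forall_6 Tm_mv axis_def)+\<close>)
  next
    case E24 show ?thesis
      by (rule mk_r[where c="2 * s E12" and i="if s E12 = s E34 then 1 else 2" and j="if s E14 = s E23 then 5 else 6" and \<sigma>="s E12 * s E14"])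
        (use s'[of E12] s'[of E34] s'[of E14] s'[of E23] E24 in \<open>(elim disjE; simp add: vec_eq_iff forall_6 Tm_mv axis_def)+\<close>)
  next
    case E34 show ?thesis
      by (rule mk_r[where c="2 * s E13" and i="if s E13 = s E24 then 3 else 4" and j="if s E14 = s E23 then 5 else 6" and \<sigma>="s E13 * s E14"])
        (use s'[of E13] s'[of E24] s'[of E14] s'[of E23] E34 in \<open>(elim disjE; simp add: vec_eq_iff forall_6 Tm_mv axis_def)+\<close>)
  qed
qed


lemma rootsA: "w \<in> W_vectors \<Longrightarrow> \<exists>c r. c \<noteq> 0 \<and> r \<in> D6_roots \<and> Tm *v w = c *\<^sub>R r"
  unfolding W_vectors_def using rootsA_ax rootsA_4 by auto

lemma refl_img: "(\<lambda>w. refl_mat (Tm *v w)) ` W_vectors = refl_mat ` D6_roots"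
proof
  show "(\<lambda>w. refl_mat (Tm *v w)) ` W_vectors \<subseteq> refl_mat ` D6_roots"
  proof
    fix A assume "A \<in> (\<lambda>w. refl_mat (Tm *v w)) ` W_vectors"
    then obtain w where w: "w \<in> W_vectors" "A = refl_mat (Tm *v w)" by blast
    obtain c r where "c \<noteq> 0" "r \<in> D6_roots" "Tm *v w = c *\<^sub>R r" using rootsA[OF w(1)] by blast
    then show "A \<in> refl_mat ` D6_roots" using w(2) refl_scale by auto
  qed
  show "refl_mat ` D6_roots \<subseteq> (\<lambda>w. refl_mat (Tm *v w)) ` W_vectors"
  proof
    fix A assume "A \<in> refl_mat ` D6_roots"
    then obtain r where r: "r \<in> D6_roots" "A = refl_mat r" by blast
    then obtain i j \<sigma> where "i \<noteq> j" "\<sigma> \<in> {1, -1}" "r = axis i 1 + \<sigma> *\<^sub>R axis j 1"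
      unfolding D6_roots_def by blast
    then obtain c w where "c \<noteq> 0" "w \<in> W_vectors" "Tm *v w = c *\<^sub>R r" using rootsB by blast
    then show "A \<in> (\<lambda>w. refl_mat (Tm *v w)) ` W_vectors" using r(2) refl_scale by (metis image_eqI)
  qed
qed

lemma phi_W: "C.phi ` (refl_mat ` W_vectors) = refl_mat ` D6_roots"
  unfolding image_image C.phi_refl by (rule refl_img)

lemma W_img: "C.phi ` W_group = weyl_D6"
  unfolding W_group_def weyl_D6_def
  by (subst C.phi_gen) (use refl_orth W_vectors_nz phi_W in auto)

lemma W_bij: "bij_betw C.phi W_group weyl_D6"
  unfolding bij_betw_def using W_img C.phi_inj by (auto intro: inj_on_subset)

lemma weyl_card: "card weyl_D6 = 23040"
proof -
  have "weyl_D6 = (SPset :: (real^6^6) set)"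
    unfolding weyl_D6_def using weyl_eq unfolding D6_roots_def roots_def by simp
  then show ?thesis using card_SPset[where 'n=6] by (simp add: fact_numeral)
qed

theorem lemma5p26:
  shows "card W_group = 23040
    \<and> (\<exists>f. bij_betw f W_group weyl_D6 \<and>
           (\<forall>A\<in>W_group. \<forall>B\<in>W_group. f (A ** B) = f A ** f B))
    \<and> (\<forall>A\<in>W_group. cact A ` L24 = L24)"
proof (intro conjI)
  show "card W_group = 23040" using bij_betw_same_card[OF W_bij] weyl_card by simp
  show "\<exists>f. bij_betw f W_group weyl_D6 \<and> (\<forall>A\<in>W_group. \<forall>B\<in>W_group. f (A ** B) = f A ** f B)"
    using W_bij C.phi_mult by blast
  show "\<forall>A\<in>W_group. cact A ` L24 = L24" using W_L24 by blast
qed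


end
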